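(* The moment generating function $M(z)=\sum_{n\ge0}m_nz^n$ of the standard V-monotone Gaussian distribution (with moments $m_{2k}=|\mathcal{OV}^2(2k)|/k!=P_k(1)$, $m_{2k+1}=0$) satisfies, for $z\in(-\tfrac12,\tfrac12)$, $M(0)=1$ and $$M(z)=\Big[S\Big(\frac{1}{\sqrt{1-2z^2}}\Big)\Big]^{-1}\quad (z\neq0).$$
   Context: $T(t)=\int_t^1\frac{s\,ds}{s^2-s+1}=-\tfrac12\log(t^2-t+1)-\tfrac{\sqrt3}{3}\big[\arctan\big(\tfrac{2t-1}{\sqrt3}\big)-\tfrac{\pi}{6}\big]$. The function $t\mapsto e^{T(t)}$ is a strictly decreasing bijection from $[0,\infty)$ onto $(0,e^{\sqrt3\pi/9}]$, and $S:(0,e^{\sqrt3\pi/9}]\to[0,\infty)$ denotes its inverse. The polynomials $P_n$ are defined by $Q_0=P_0=1$, $Q_{n+1}(x)=\sum_{m=0}^n[\int_x^1Q_m]Q_{n-m}(x)$, $P_{n+1}(x)=\sum_{m=0}^n[\int_0^xP_m+\int_x^1Q_m]P_{n-m}(x)$ on $[0,1]$. $\mathcal{OV}^2(2k)$: non-crossing pair partitions of $[2k]$ with a bijective labeling by $[k]$ such that along every chain of successively nearest outer blocks the labels are strictly decreasing then strictly increasing. *)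

theory Defs
  imports "HOL-Analysis.Analysis"
begin

text \<open>The polynomials Q_n, P_n on [0,1], as real functions (values outside [0,1] are irrelevant).\<close>

function Qpol :: "nat \<Rightarrow> real \<Rightarrow> real" where
  "Qpol 0 x = 1"
| "Qpol (Suc n) x = (\<Sum>m\<le>n. integral {x..1} (Qpol m) * Qpol (n - m) x)"
  by pat_completeness auto
termination by (relation "Wellfounded.measure fst") auto

function Ppol :: "nat \<Rightarrow> real \<Rightarrow> real" where
  "Ppol 0 x = 1"
| "Ppol (Suc n) x =
     (\<Sum>m\<le>n. (integral {0..x} (Ppol m) + integral {x..1} (Qpol m)) * Ppol (n - m) x)"
  by pat_completeness auto
termination by (relation "Wellfounded.measure fst") auto

text \<open>T(t) = integral from t to 1 of s/(s^2-s+1), in the closed form given in the paper.\<close>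
definition Tfun :: "real \<Rightarrow> real" where
  "Tfun t = - (1/2) * ln (t^2 - t + 1)
            - (sqrt 3 / 3) * (arctan ((2*t - 1) / sqrt 3) - pi / 6)"

definition Sinv :: "real \<Rightarrow> real" where
  "Sinv y = (THE t. t \<ge> 0 \<and> exp (Tfun t) = y)"

definition vmom :: "nat \<Rightarrow> real" where
  "vmom n = (if even n then Ppol (n div 2) 1 else 0)"

end

theory Submission
  imports Defs
begin


function Rc :: "nat \<Rightarrow> real" where
 "Rc 0 = 1" | "Rc (Suc n) = (\<Sum>m\<le>n. Rc m * Rc (n - m))"
  by pat_completeness auto
termination by (relation "Wellfounded.measure id") auto

lemma Rc_nonneg: "0 \<le> Rc n"
proof (induction n rule: less_induct)
  case (less n) then show ?case by (cases n) (auto intro!: sum_nonneg)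
qed

lemma conv_le:
  fixes a :: "nat \<Rightarrow> real"
  assumes "\<And>n. 0 \<le> a n"
  shows "(\<Sum>n<N. \<Sum>m\<le>n. a m * a (n - m)) \<le> (\<Sum>n<N. a n) * (\<Sum>n<N. a n)"
proof -
  have "(\<Sum>n<N. \<Sum>m\<le>n. a m * a (n - m)) = (\<Sum>(i,j)\<in>{(i,j). i+j < N}. a i * a j)"
    by (rule sum.triangle_reindex[symmetric])
  also have "\<dots> \<le> (\<Sum>(i,j)\<in>{..<N} \<times> {..<N}. a i * a j)"
    by (rule sum_mono2) (auto intro!: mult_nonneg_nonneg assms)
  also have "\<dots> = (\<Sum>n<N. a n) * (\<Sum>n<N. a n)"
    by (simp add: sum_product sum.cartesian_product)
  finally show ?thesis .
qed

lemma Rc_partial: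
  assumes "0 \<le> w" "w \<le> 1/4"
  shows "(\<Sum>n<N. Rc n * w^n) \<le> 2"
proof (induction N)
  case 0 then show ?case by simp
next
  case (Suc N)
  define a where "a n = Rc n * w^n" for n
  have a0: "0 \<le> a n" for n using Rc_nonneg assms by (simp add: a_def)
  have "(\<Sum>n<Suc N. Rc n * w^n) = 1 + (\<Sum>n<N. Rc (Suc n) * w^(Suc n))"
    by (simp only: sum.lessThan_Suc_shift) simp
  also have "(\<Sum>n<N. Rc (Suc n) * w^(Suc n)) = w * (\<Sum>n<N. \<Sum>m\<le>n. a m * a (n - m))"
    unfolding a_def
    by (simp add: sum_distrib_left sum_distrib_right algebra_simps power_add[symmetric])
  also have "\<dots> \<le> w * ((\<Sum>n<N. a n) * (\<Sum>n<N. a n))"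
    using conv_le[OF a0] assms by (intro mult_left_mono) auto
  also have "\<dots> \<le> w * (2 * 2)"
    using Suc.IH a0 assms unfolding a_def
    by (intro mult_left_mono mult_mono) (auto intro: sum_nonneg)
  finally show ?case using assms by linarith
qed

lemma int_bounds:
  fixes f :: "real \<Rightarrow> real"
  assumes c: "continuous_on {0..1} f" and b: "\<And>x. x \<in> {0..1} \<Longrightarrow> 0 \<le> f x \<and> f x \<le> B"
    and x: "0 \<le> x" "x \<le> 1"
  shows "0 \<le> integral {x..1} f" "integral {x..1} f \<le> (1 - x) * B"
        "0 \<le> integral {0..x} f" "integral {0..x} f \<le> x * B"
proof -
  have i: "f integrable_on {0..1}" using c by (rule integrable_continuous_real)
  have i1: "f integrable_on {x..1}" by (rule integrable_on_subinterval[OF i]) (use x in auto)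
  have i2: "f integrable_on {0..x}" by (rule integrable_on_subinterval[OF i]) (use x in auto)
  show "0 \<le> integral {x..1} f" using i1 b x by (intro integral_nonneg) auto
  show "0 \<le> integral {0..x} f" using i2 b x by (intro integral_nonneg) auto
  have "integral {x..1} f \<le> integral {x..1} (\<lambda>_. B)" using i1 b x by (intro integral_le) auto
  then show "integral {x..1} f \<le> (1 - x) * B" using x by simp
  have "integral {0..x} f \<le> integral {0..x} (\<lambda>_. B)" using i2 b x by (intro integral_le) auto
  then show "integral {0..x} f \<le> x * B" using x by simp
qed

lemma cont_int:
  fixes f :: "real \<Rightarrow> real"
  assumes c: "continuous_on {0..1} f"
  shows "continuous_on {0..1} (\<lambda>x. integral {0..x} f)" "continuous_on {0..1} (\<lambda>x. integral {x..1} f)"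
  using indefinite_integral_continuous_1[OF integrable_continuous_real[OF c]]
        indefinite_integral_continuous_1'[OF integrable_continuous_real[OF c]] by auto

lemma Q_props: "continuous_on {0..1} (Qpol n) \<and> (\<forall>x\<in>{0..1}. 0 \<le> Qpol n x \<and> Qpol n x \<le> Rc n)"
proof (induction n rule: less_induct)
  case (less n)
  show ?case
  proof (cases n)
    case 0 then show ?thesis by simp
  next
    case (Suc k)
    have IH: "continuous_on {0..1} (Qpol m)" "\<And>x. x\<in>{0..1} \<Longrightarrow> 0 \<le> Qpol m x \<and> Qpol m x \<le> Rc m"
      if "m \<le> k" for m using less[of m] that Suc by auto
    have eq: "Qpol n = (\<lambda>x. \<Sum>m\<le>k. integral {x..1} (Qpol m) * Qpol (k - m) x)"
      using Suc by (auto simp: fun_eq_iff)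
    have "continuous_on {0..1} (Qpol n)"
      unfolding eq by (intro continuous_on_sum continuous_on_mult cont_int IH) auto
    moreover have "0 \<le> Qpol n x \<and> Qpol n x \<le> Rc n" if x: "x \<in> {0..1}" for x
    proof -
      have "Qpol n x \<le> (\<Sum>m\<le>k. Rc m * Rc (k - m))"
        unfolding eq
      proof (intro sum_mono mult_mono)
        fix m assume m: "m \<in> {..k}"
        have "integral {x..1} (Qpol m) \<le> (1 - x) * Rc m"
          using int_bounds(2)[OF IH(1) IH(2)] m x by auto
        also have "\<dots> \<le> Rc m" using x Rc_nonneg[of m] by (intro mult_left_le_one_le) auto
        finally show "integral {x..1} (Qpol m) \<le> Rc m" .
        show "Qpol (k - m) x \<le> Rc (k - m)" using IH(2)[of "k-m"] x by auto
        show "0 \<le> Rc m" by (rule Rc_nonneg)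
        show "0 \<le> Qpol (k - m) x" using IH(2)[of "k-m"] x by auto
      qed
      moreover have "0 \<le> Qpol n x" unfolding eq
        using int_bounds(1)[OF IH(1) IH(2)] IH(2) x by (intro sum_nonneg mult_nonneg_nonneg) auto
      ultimately show ?thesis using Suc by simp
    qed
    ultimately show ?thesis by blast
  qed
qed

lemma Q_cont: "continuous_on {0..1} (Qpol n)" and Q_nonneg: "x \<in> {0..1} \<Longrightarrow> 0 \<le> Qpol n x"
  and Q_le: "x \<in> {0..1} \<Longrightarrow> Qpol n x \<le> Rc n"
  using Q_props[of n] by auto

lemma P_props: "continuous_on {0..1} (Ppol n) \<and> (\<forall>x\<in>{0..1}. 0 \<le> Ppol n x \<and> Ppol n x \<le> Rc n)"
proof (induction n rule: less_induct)
  case (less n)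
  show ?case
  proof (cases n)
    case 0 then show ?thesis by simp
  next
    case (Suc k)
    have IH: "continuous_on {0..1} (Ppol m)" "\<And>x. x\<in>{0..1} \<Longrightarrow> 0 \<le> Ppol m x \<and> Ppol m x \<le> Rc m"
      if "m \<le> k" for m using less[of m] that Suc by auto
    have QH: "\<And>x. x\<in>{0..1} \<Longrightarrow> 0 \<le> Qpol m x \<and> Qpol m x \<le> Rc m" for m
      using Q_nonneg Q_le by auto
    have eq: "Ppol n = (\<lambda>x. \<Sum>m\<le>k. (integral {0..x} (Ppol m) + integral {x..1} (Qpol m)) * Ppol (k - m) x)"
      using Suc by (auto simp: fun_eq_iff)
    have "continuous_on {0..1} (Ppol n)"
      unfolding eq by (intro continuous_on_sum continuous_on_mult continuous_on_add cont_int IH Q_cont) auto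
    moreover have "0 \<le> Ppol n x \<and> Ppol n x \<le> Rc n" if x: "x \<in> {0..1}" for x
    proof -
      have "Ppol n x \<le> (\<Sum>m\<le>k. Rc m * Rc (k - m))"
        unfolding eq
      proof (intro sum_mono mult_mono)
        fix m assume m: "m \<in> {..k}"
        have "integral {0..x} (Ppol m) + integral {x..1} (Qpol m) \<le> x * Rc m + (1 - x) * Rc m"
          using int_bounds(2)[OF Q_cont QH] int_bounds(4)[OF IH(1) IH(2)] m x by (intro add_mono) auto
        then show "integral {0..x} (Ppol m) + integral {x..1} (Qpol m) \<le> Rc m" by (simp add: algebra_simps)
        show "Ppol (k - m) x \<le> Rc (k - m)" using IH(2)[of "k-m"] x by auto
        show "0 \<le> Rc m" by (rule Rc_nonneg)
        show "0 \<le> Ppol (k - m) x" using IH(2)[of "k-m"] x by auto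
      qed
      moreover have "0 \<le> Ppol n x" unfolding eq
        using int_bounds(1)[OF Q_cont QH] int_bounds(3)[OF IH(1) IH(2)] IH(2) x
        by (intro sum_nonneg mult_nonneg_nonneg add_nonneg_nonneg) auto
      ultimately show ?thesis using Suc by simp
    qed
    ultimately show ?thesis by blast
  qed
qed

lemma P_cont: "continuous_on {0..1} (Ppol n)" and P_nonneg: "x \<in> {0..1} \<Longrightarrow> 0 \<le> Ppol n x"
  and P_le: "x \<in> {0..1} \<Longrightarrow> Ppol n x \<le> Rc n"
  using P_props[of n] by auto



lemma Rc_summable: assumes "0 \<le> w" "w \<le> 1/4" shows "summable (\<lambda>n. Rc n * w^n)"
proof (rule bounded_imp_summable)
  show "0 \<le> Rc n * w^n" for n using assms Rc_nonneg by simp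
  show "(\<Sum>k\<le>n. Rc k * w^k) \<le> 2" for n
    using Rc_partial[OF assms, of "Suc n"] by (simp add: lessThan_Suc_atMost)
qed

lemma series_fun:
  fixes f :: "nat \<Rightarrow> real \<Rightarrow> real" and w :: real
  assumes c: "\<And>n. continuous_on {0..1} (f n)" and b: "\<And>n x. x\<in>{0..1} \<Longrightarrow> 0 \<le> f n x \<and> f n x \<le> Rc n"
    and w: "0 \<le> w" "w \<le> 1/4"
  shows "\<And>x. x\<in>{0..1} \<Longrightarrow> (\<lambda>n. f n x * w^n) sums (\<Sum>n. f n x * w^n)"
    and "continuous_on {0..1} (\<lambda>x. \<Sum>n. f n x * w^n)"
    and "\<And>x. x\<in>{0..1} \<Longrightarrow> (\<lambda>n. integral {0..x} (f n) * w^n) sums integral {0..x} (\<lambda>x. \<Sum>n. f n x * w^n)"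
    and "\<And>x. x\<in>{0..1} \<Longrightarrow> (\<lambda>n. integral {x..1} (f n) * w^n) sums integral {x..1} (\<lambda>x. \<Sum>n. f n x * w^n)"
proof -
  define F where "F = (\<lambda>x. \<Sum>n. f n x * w^n)"
  have sM: "summable (\<lambda>n. Rc n * w^n)" by (rule Rc_summable[OF w])
  have nb: "norm (f n x * w^n) \<le> Rc n * w^n" if "x \<in> {0..1}" for n x
    using b[OF that, of n] w by (simp add: abs_mult mult_right_mono)
  have UL: "uniform_limit {0..1} (\<lambda>n x. \<Sum>i<n. f i x * w^i) F sequentially"
    unfolding F_def by (rule Weierstrass_m_test[OF nb sM])
  have pc: "continuous_on {0..1} (\<lambda>x. \<Sum>i<n. f i x * w^i)" for n
    by (intro continuous_on_sum continuous_on_mult c continuous_on_const)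
  show "(\<lambda>n. f n x * w^n) sums (\<Sum>n. f n x * w^n)" if "x\<in>{0..1}" for x
    by (rule summable_sums, rule summable_comparison_test[OF _ sM]) (use nb that in auto)
  show "continuous_on {0..1} (\<lambda>x. \<Sum>n. f n x * w^n)"
    using uniform_limit_theorem[OF _ UL] pc unfolding F_def by (auto intro: always_eventually)
  have intlim: "(\<lambda>n. \<Sum>i<n. integral {a..b} (f i) * w^i) \<longlonglongrightarrow> integral {a..b} F"
    if ab: "0 \<le> a" "b \<le> 1" for a b
  proof -
    have sub: "{a..b} \<subseteq> {0..1}" using ab by auto
    have UL': "uniform_limit {a..b} (\<lambda>n x. \<Sum>i<n. f i x * w^i) F sequentially"
      by (rule uniform_limit_on_subset[OF UL sub])
    have pc': "continuous_on {a..b} (\<lambda>x. \<Sum>i<n. f i x * w^i)" for n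
      by (rule continuous_on_subset[OF pc sub])
    obtain I J where I: "\<And>n. ((\<lambda>x. \<Sum>i<n. f i x * w^i) has_integral I n) {a..b}"
      and J: "(F has_integral J) {a..b}" and lim: "I \<longlonglongrightarrow> J"
      using uniform_limit_integral[OF UL' pc'] by auto
    have ci: "f i integrable_on {a..b}" for i
      using integrable_continuous_real continuous_on_subset[OF c sub] by blast
    have "I n = (\<Sum>i<n. integral {a..b} (f i) * w^i)" for n
    proof -
      have "I n = integral {a..b} (\<lambda>x. \<Sum>i<n. f i x * w^i)" using I[of n] by (simp add: integral_unique)
      also have "\<dots> = (\<Sum>i<n. integral {a..b} (\<lambda>x. f i x * w^i))"
        by (rule integral_sum) (auto intro: integrable_on_mult_left ci)
      also have "\<dots> = (\<Sum>i<n. integral {a..b} (f i) * w^i)"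
        by (simp add: integral_mult_left)
      finally show ?thesis .
    qed
    then have "I = (\<lambda>n. \<Sum>i<n. integral {a..b} (f i) * w^i)" by auto
    moreover have "J = integral {a..b} F" using J by (simp add: integral_unique)
    ultimately show ?thesis using lim by simp
  qed
  show "(\<lambda>n. integral {0..x} (f n) * w^n) sums integral {0..x} (\<lambda>x. \<Sum>n. f n x * w^n)" if "x\<in>{0..1}" for x
    unfolding sums_def using intlim[of 0 x] that unfolding F_def by auto
  show "(\<lambda>n. integral {x..1} (f n) * w^n) sums integral {x..1} (\<lambda>x. \<Sum>n. f n x * w^n)" if "x\<in>{0..1}" for x
    unfolding sums_def using intlim[of x 1] that unfolding F_def by auto
qed



definition Qg :: "real \<Rightarrow> real \<Rightarrow> real" where "Qg w x = (\<Sum>n. Qpol n x * w^n)"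
definition Pg :: "real \<Rightarrow> real \<Rightarrow> real" where "Pg w x = (\<Sum>n. Ppol n x * w^n)"

lemma Qb: "x\<in>{0..1} \<Longrightarrow> 0 \<le> Qpol n x \<and> Qpol n x \<le> Rc n" using Q_nonneg Q_le by auto
lemma Pb: "x\<in>{0..1} \<Longrightarrow> 0 \<le> Ppol n x \<and> Ppol n x \<le> Rc n" using P_nonneg P_le by auto

context fixes w :: real assumes w: "0 \<le> w" "w \<le> 1/4"
begin

lemmas QS = series_fun[of Qpol, OF Q_cont Qb w, folded Qg_def]
lemmas PS = series_fun[of Ppol, OF P_cont Pb w, folded Pg_def]

lemma QS1: "x\<in>{0..1} \<Longrightarrow> (\<lambda>n. Qpol n x * w^n) sums Qg w x" using QS(1) by (simp add: Qg_def)
lemma PS1: "x\<in>{0..1} \<Longrightarrow> (\<lambda>n. Ppol n x * w^n) sums Pg w x" using PS(1) by (simp add: Pg_def)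
lemma QS4: "x\<in>{0..1} \<Longrightarrow> (\<lambda>n. integral {x..1} (Qpol n) * w^n) sums integral {x..1} (Qg w)" using QS(4) by auto
lemma PS3: "x\<in>{0..1} \<Longrightarrow> (\<lambda>n. integral {0..x} (Ppol n) * w^n) sums integral {0..x} (Pg w)" using PS(3) by auto
lemma Qg_cont: "continuous_on {0..1} (Qg w)" using QS(2) by (simp add: Qg_def[abs_def])
lemma Pg_cont: "continuous_on {0..1} (Pg w)" using PS(2) by (simp add: Pg_def[abs_def])

lemma Qg_nonneg: "x\<in>{0..1} \<Longrightarrow> 0 \<le> Qg w x"
  unfolding Qg_def using Qb w by (intro suminf_nonneg sums_summable[OF QS(1)]) auto

lemma Pg_nonneg: "x\<in>{0..1} \<Longrightarrow> 0 \<le> Pg w x"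
  unfolding Pg_def using Pb w by (intro suminf_nonneg sums_summable[OF PS(1)]) auto

lemma Q_fe: assumes x: "x\<in>{0..1}" shows "Qg w x = 1 + w * integral {x..1} (Qg w) * Qg w x"
proof -
  define a where "a m = integral {x..1} (Qpol m) * w^m" for m
  define b where "b k = Qpol k x * w^k" for k
  have sa: "a sums integral {x..1} (Qg w)" unfolding a_def using QS4[OF x] .
  have sb: "b sums Qg w x" unfolding b_def using QS1[OF x] .
  have a0: "0 \<le> a m" for m unfolding a_def using int_bounds(1)[OF Q_cont Qb] x w by auto
  have b0: "0 \<le> b m" for m unfolding b_def using Qb x w by auto
  have "(\<lambda>k. \<Sum>i\<le>k. a i * b (k - i)) sums (suminf a * suminf b)"
    by (rule Cauchy_product_sums) (use sa sb a0 b0 in \<open>auto simp: sums_iff\<close>)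
  moreover have "(\<Sum>i\<le>k. a i * b (k - i)) = Qpol (Suc k) x * w^k" for k
  proof -
    have "a i * b (k - i) = (integral {x..1} (Qpol i) * Qpol (k - i) x) * w^k" if "i \<le> k" for i
    proof -
      have "a i * b (k - i) = (integral {x..1} (Qpol i) * Qpol (k - i) x) * (w^i * w^(k-i))"
        unfolding a_def b_def by (simp add: algebra_simps)
      also have "w^i * w^(k-i) = w^k" using that by (simp add: power_add[symmetric])
      finally show ?thesis .
    qed
    then have "(\<Sum>i\<le>k. a i * b (k - i)) = (\<Sum>i\<le>k. (integral {x..1} (Qpol i) * Qpol (k - i) x) * w^k)"
      by (intro sum.cong) auto
    then show ?thesis by (simp add: sum_distrib_right)
  qed
  ultimately have "(\<lambda>k. Qpol (Suc k) x * w^k) sums (integral {x..1} (Qg w) * Qg w x)"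
    using sa sb by (simp add: sums_iff)
  then have "(\<lambda>k. w * (Qpol (Suc k) x * w^k)) sums (w * (integral {x..1} (Qg w) * Qg w x))"
    by (rule sums_mult)
  then have "(\<lambda>k. b (Suc k)) sums (w * (integral {x..1} (Qg w) * Qg w x))"
    unfolding b_def by (simp add: algebra_simps)
  then have "b sums (w * (integral {x..1} (Qg w) * Qg w x) + 1)"
    by (simp only: sums_Suc_iff) (simp add: b_def)
  with sb show ?thesis by (simp add: sums_iff algebra_simps)
qed

lemma P_fe: assumes x: "x\<in>{0..1}"
  shows "Pg w x = 1 + w * (integral {0..x} (Pg w) + integral {x..1} (Qg w)) * Pg w x"
proof -
  define a where "a m = (integral {0..x} (Ppol m) + integral {x..1} (Qpol m)) * w^m" for m
  define b where "b k = Ppol k x * w^k" for k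
  have sa: "a sums (integral {0..x} (Pg w) + integral {x..1} (Qg w))" unfolding a_def
    using sums_add[OF PS3[OF x] QS4[OF x]] by (simp add: algebra_simps)
  have sb: "b sums Pg w x" unfolding b_def using PS1[OF x] .
  have a0: "0 \<le> a m" for m unfolding a_def using int_bounds(1)[OF Q_cont Qb] int_bounds(3)[OF P_cont Pb] x w by auto
  have b0: "0 \<le> b m" for m unfolding b_def using Pb x w by auto
  have "(\<lambda>k. \<Sum>i\<le>k. a i * b (k - i)) sums (suminf a * suminf b)"
    by (rule Cauchy_product_sums) (use sa sb a0 b0 in \<open>auto simp: sums_iff\<close>)
  moreover have "(\<Sum>i\<le>k. a i * b (k - i)) = Ppol (Suc k) x * w^k" for k
  proof -
    have "a i * b (k - i) = ((integral {0..x} (Ppol i) + integral {x..1} (Qpol i)) * Ppol (k - i) x) * w^k" if "i \<le> k" for i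
    proof -
      have "a i * b (k - i) = ((integral {0..x} (Ppol i) + integral {x..1} (Qpol i)) * Ppol (k - i) x) * (w^i * w^(k-i))"
        unfolding a_def b_def by (simp add: algebra_simps)
      also have "w^i * w^(k-i) = w^k" using that by (simp add: power_add[symmetric])
      finally show ?thesis .
    qed
    then have "(\<Sum>i\<le>k. a i * b (k - i)) = (\<Sum>i\<le>k. ((integral {0..x} (Ppol i) + integral {x..1} (Qpol i)) * Ppol (k - i) x) * w^k)"
      by (intro sum.cong) auto
    then show ?thesis by (simp add: sum_distrib_right)
  qed
  ultimately have "(\<lambda>k. Ppol (Suc k) x * w^k) sums ((integral {0..x} (Pg w) + integral {x..1} (Qg w)) * Pg w x)"
    using sa sb by (simp add: sums_iff)
  then have "(\<lambda>k. w * (Ppol (Suc k) x * w^k)) sums (w * ((integral {0..x} (Pg w) + integral {x..1} (Qg w)) * Pg w x))"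
    by (rule sums_mult)
  then have "(\<lambda>k. b (Suc k)) sums (w * ((integral {0..x} (Pg w) + integral {x..1} (Qg w)) * Pg w x))"
    unfolding b_def by (simp add: algebra_simps)
  then have "b sums (w * ((integral {0..x} (Pg w) + integral {x..1} (Qg w)) * Pg w x) + 1)"
    by (simp only: sums_Suc_iff) (simp add: b_def)
  with sb show ?thesis by (simp add: sums_iff algebra_simps)
qed

end


lemma den_pos: "0 < (t::real)^2 - t + 1"
proof -
  have "(t::real)^2 - t + 1 = (t - 1/2)^2 + 3/4" by (simp add: power2_eq_square algebra_simps)
  also have "\<dots> > 0" by (simp add: add_nonneg_pos)
  finally show ?thesis .
qed

lemma Tfun_deriv: "(Tfun has_real_derivative (- t / (t^2 - t + 1))) (at t)"
proof -
  have d: "0 < t^2 - t + 1" by (rule den_pos)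
  have h1: "0 < t*t*4 - t*4 + 4" using d by (simp add: power2_eq_square)
  have h2: "0 < 3 + (2*t - 1)*(2*t - 1)" by (simp add: add_pos_nonneg)
  have h3: "0 < 2*(t*t) - 2*t + 2" using d by (simp add: power2_eq_square)
  have h4: "0 < t*t - t + 1" using d by (simp add: power2_eq_square)
  have s3: "sqrt 3 * (sqrt 3 * x) = 3 * x" for x :: real by (simp add: mult.assoc[symmetric])
  have h5: "1296 + (t*(t*3888) + t*(t*(t*(t*1296)))) - (t*2592 + t*(t*(t*2592))) \<noteq> 0"
  proof -
    have "1296 + (t*(t*3888) + t*(t*(t*(t*1296)))) - (t*2592 + t*(t*(t*2592))) = 1296*((t*t - t + 1)*(t*t-t+1))"
      by (simp add: algebra_simps)
    then show ?thesis using h4 by simp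
  qed
  have h6: "1296 + (t*(t*3888) + t*(t*(t*(t*1296)))) \<noteq> t*2592 + t*(t*(t*2592))" using h5 by simp
  show ?thesis unfolding Tfun_def[abs_def]
    using h1 h2 h3 h4
    by (auto intro!: derivative_eq_intros simp: power2_eq_square field_simps)
       (simp_all add: algebra_simps s3 divide_eq_eq h5 h6)
qed

lemma Tfun_1: "Tfun 1 = 0"
proof -
  have "arctan (1 / sqrt 3) = pi / 6"
    using arctan_tan[of "pi/6"] tan_30 by (simp add: pi_gt_zero)
  then show ?thesis unfolding Tfun_def by simp
qed

lemma Tfun_cont: "continuous_on S Tfun"
  using Tfun_deriv DERIV_isCont continuous_at_imp_continuous_on by blast

lemma Tfun_strict: assumes "0 \<le> a" "a < b" shows "Tfun b < Tfun a"
proof (rule DERIV_neg_imp_decreasing_open[OF assms(2)])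
  fix x assume "a < x" "x < b"
  then show "\<exists>y. DERIV Tfun x :> y \<and> y < 0" using assms den_pos[of x]
    by (intro exI[of _ "- x / (x^2 - x + 1)"] conjI Tfun_deriv) (simp add: divide_pos_pos)
qed (rule Tfun_cont)

lemma Sinv_eq: assumes "0 \<le> t" shows "Sinv (exp (Tfun t)) = t"
  unfolding Sinv_def
proof (rule the_equality)
  show "0 \<le> t \<and> exp (Tfun t) = exp (Tfun t)" using assms by simp
  fix s assume s: "0 \<le> s \<and> exp (Tfun s) = exp (Tfun t)"
  then have e: "Tfun s = Tfun t" by simp
  show "s = t"
  proof (rule ccontr)
    assume "s \<noteq> t"
    then have "s < t \<or> t < s" by auto
    then show False using Tfun_strict[of s t] Tfun_strict[of t s] s assms e by auto
  qed
qed

lemma key_alg: assumes a: "0 < (a::real)" and d: "0 < d"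
  shows "- (d/a) / ((d/a)^2 - d/a + 1) * (((w/a - w/d) * a - d * (w/a)) / (a * a)) - (w/a)/a = 0"
proof -
  define K where "K = d^2 - d*a + a^2"
  have n: "(d/a)^2 - d/a + 1 \<noteq> 0" using den_pos[of "d/a"] by simp
  have e1: "(d/a)^2 - d/a + 1 = K / a^2" using a unfolding K_def by (simp add: field_simps power2_eq_square)
  have K0: "K \<noteq> 0" using n e1 by auto
  have f1: "- (d/a) / ((d/a)^2 - d/a + 1) = - d * a / K" unfolding e1 using a K0
    by (simp add: field_simps power2_eq_square)
  have f2: "((w/a - w/d) * a - d * (w/a)) / (a * a) = - w * K / (a^3 * d)"
    using a d unfolding K_def by (simp add: field_simps power2_eq_square power3_eq_cube)
  have "- d * a / K * (- w * K / (a^3 * d)) = w / a^2"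
    using a d K0 by (simp add: field_simps power2_eq_square power3_eq_cube)
  then show ?thesis unfolding f1 f2 using a by (simp add: power2_eq_square)
qed



lemma deriv_int0:
  fixes f :: "real \<Rightarrow> real"
  assumes c: "continuous_on {0..1} f" and x: "0 < x" "x < 1"
  shows "((\<lambda>u. integral {0..u} f) has_real_derivative f x) (at x)"
proof -
  have "((\<lambda>u. integral {0..u} f) has_vector_derivative f x) (at x within {0..1})"
    using integral_has_vector_derivative[OF c] x by auto
  moreover have "at x within {0..1} = at x" using x by (intro at_within_interior) auto
  ultimately show ?thesis by (simp add: has_real_derivative_iff_has_vector_derivative)
qed

lemma deriv_int1:
  fixes f :: "real \<Rightarrow> real"
  assumes c: "continuous_on {0..1} f" and x: "0 < x" "x < 1"
  shows "((\<lambda>u. integral {u..1} f) has_real_derivative (- f x)) (at x)"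
proof -
  have "((\<lambda>u. integral {0..1} f - integral {0..u} f) has_real_derivative 0 - f x) (at x)"
    by (intro DERIV_diff DERIV_const deriv_int0[OF c x])
  then have d: "((\<lambda>u. integral {0..1} f - integral {0..u} f) has_real_derivative - f x) (at x)" by simp
  have i: "f integrable_on {0..1}" using c by (rule integrable_continuous_real)
  show ?thesis
  proof (rule has_field_derivative_transform_within_open[OF d, of "{0<..<1}"])
    fix u :: real assume "u \<in> {0<..<1}"
    then show "integral {0..1} f - integral {0..u} f = integral {u..1} f"
      using Henstock_Kurzweil_Integration.integral_combine[where f=f and a=0 and c=u and b=1] i by auto
  qed (use x in auto)
qed

definition Af where "Af w x = 1 - w * integral {x..1} (Qg w)"
definition Yf where "Yf w x = w * integral {0..x} (Pg w)"

context fixes w :: real assumes w: "0 \<le> w" "w \<le> 1/4"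
begin

lemma QA: "x\<in>{0..1} \<Longrightarrow> Qg w x * Af w x = 1"
  using Q_fe[OF w, of x] unfolding Af_def by (simp add: algebra_simps)

lemma PD: "x\<in>{0..1} \<Longrightarrow> Pg w x * (Af w x - Yf w x) = 1"
  using P_fe[OF w, of x] unfolding Af_def Yf_def by (simp add: algebra_simps)

lemma A_pos: "x\<in>{0..1} \<Longrightarrow> 0 < Af w x"
  using QA[of x] Qg_nonneg[OF w, of x] by (metis mult_nonneg_nonpos not_le zero_neq_one order.antisym zero_le_one)

lemma D_pos: "x\<in>{0..1} \<Longrightarrow> 0 < Af w x - Yf w x"
  using PD[of x] Pg_nonneg[OF w, of x] by (metis mult_nonneg_nonpos not_le zero_neq_one order.antisym zero_le_one)

lemma A_cont: "continuous_on {0..1} (Af w)"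
  unfolding Af_def[abs_def] by (intro continuous_on_diff continuous_on_mult continuous_on_const cont_int Qg_cont[OF w])

lemma Y_cont: "continuous_on {0..1} (Yf w)"
  unfolding Yf_def[abs_def] by (intro continuous_on_mult continuous_on_const cont_int Pg_cont[OF w])

lemma A_deriv: "0 < x \<Longrightarrow> x < 1 \<Longrightarrow> (Af w has_real_derivative w / Af w x) (at x)"
proof -
  assume x: "0 < x" "x < 1"
  have "(Af w has_real_derivative 0 - w * (- Qg w x)) (at x)"
    unfolding Af_def[abs_def] by (intro DERIV_diff DERIV_const DERIV_cmult deriv_int1[OF Qg_cont[OF w] x])
  moreover have "Qg w x = 1 / Af w x" using QA[of x] A_pos[of x] x by (simp add: field_simps)
  ultimately show ?thesis by simp
qed

lemma Y_deriv: "0 < x \<Longrightarrow> x < 1 \<Longrightarrow> (Yf w has_real_derivative w / (Af w x - Yf w x)) (at x)"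
proof -
  assume x: "0 < x" "x < 1"
  have "(Yf w has_real_derivative w * Pg w x) (at x)"
    unfolding Yf_def[abs_def] by (intro DERIV_cmult deriv_int0[OF Pg_cont[OF w] x])
  moreover have "Pg w x = 1 / (Af w x - Yf w x)" using PD[of x] D_pos[of x] x by (simp add: field_simps)
  ultimately show ?thesis by simp
qed

lemma A1: "Af w 1 = 1" by (simp add: Af_def)
lemma Y0: "Yf w 0 = 0" by (simp add: Yf_def)

lemma A0: "Af w 0 = sqrt (1 - 2*w)"
proof -
  define H where "H x = (Af w x)^2 - 2*w*x" for x
  have "H 1 = H 0"
  proof (rule DERIV_isconst_end[of 0 1 H])
    show "continuous_on {0..1} H" unfolding H_def
      by (intro continuous_on_diff continuous_on_power continuous_on_mult A_cont continuous_on_const continuous_on_id)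
    fix x :: real assume x: "0 < x" "x < 1"
    have "(H has_real_derivative (2 * Af w x * (w / Af w x) - 2 * w)) (at x)"
      unfolding H_def[abs_def] using A_deriv[OF x]
      by (auto intro!: derivative_eq_intros)
    moreover have "2 * Af w x * (w / Af w x) - 2 * w = 0" using A_pos[of x] x by simp
    ultimately show "(H has_real_derivative 0) (at x)" by simp
  qed simp
  then have "(Af w 0)^2 = 1 - 2*w" unfolding H_def by (simp add: A1)
  then show ?thesis using A_pos[of 0] by (intro real_sqrt_unique[symmetric]) auto
qed

lemma main_rel: "exp (Tfun (Af w 1 - Yf w 1)) = 1 / sqrt (1 - 2*w)"
proof -
  define G where "G x = Tfun ((Af w x - Yf w x) / Af w x) - ln (Af w x)" for x
  have "G 1 = G 0"
  proof (rule DERIV_isconst_end[of 0 1 G])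
    have ap: "\<forall>x\<in>{0..1}. Af w x \<noteq> 0" using A_pos by fastforce
    have ap': "\<forall>x\<in>{0..1}. 0 < Af w x" using A_pos by fastforce
    show "continuous_on {0..1} G" unfolding G_def
      by (intro continuous_on_diff continuous_on_compose2[OF Tfun_cont[of UNIV]]
            continuous_on_divide A_cont Y_cont continuous_on_ln ap ap') auto
    fix x :: real assume x: "0 < x" "x < 1"
    define a where "a = Af w x"
    define d where "d = Af w x - Yf w x"
    have a: "0 < a" unfolding a_def using A_pos[of x] x by simp
    have d: "0 < d" unfolding d_def using D_pos[of x] x by simp
    have dA: "(Af w has_real_derivative w / a) (at x)" unfolding a_def by (rule A_deriv[OF x])
    have dD: "((\<lambda>x. Af w x - Yf w x) has_real_derivative (w / a - w / d)) (at x)"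
      unfolding a_def d_def by (intro DERIV_diff A_deriv[OF x] Y_deriv[OF x])
    have dS: "((\<lambda>x. (Af w x - Yf w x) / Af w x) has_real_derivative
        ((w/a - w/d) * a - d * (w/a)) / (a * a)) (at x)"
      using DERIV_divide[OF dD dA] a unfolding a_def d_def by simp
    have dT: "((\<lambda>x. Tfun ((Af w x - Yf w x) / Af w x)) has_real_derivative
        (- (d/a) / ((d/a)^2 - d/a + 1)) * (((w/a - w/d) * a - d * (w/a)) / (a * a))) (at x)"
      using DERIV_chain2[OF Tfun_deriv dS] unfolding a_def d_def by simp
    have dL: "((\<lambda>x. ln (Af w x)) has_real_derivative (w/a) / a) (at x)"
      using DERIV_chain2[OF DERIV_ln_divide[OF a[unfolded a_def]] dA[unfolded a_def]] unfolding a_def by (simp add: divide_inverse mult.commute)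
    have "(G has_real_derivative (- (d/a) / ((d/a)^2 - d/a + 1)) * (((w/a - w/d) * a - d * (w/a)) / (a * a)) - (w/a) / a) (at x)"
      unfolding G_def[abs_def] by (intro DERIV_diff dT dL)
    then show "(G has_real_derivative 0) (at x)" using key_alg[OF a d, of w] by simp
  qed simp
  then have "Tfun (Af w 1 - Yf w 1) = - ln (sqrt (1 - 2*w))"
    unfolding G_def using A_pos[of 0] by (simp add: A1 Y0 A0 Tfun_1)
  moreover have "0 < sqrt (1 - 2*w)" using w by simp
  ultimately show ?thesis by (simp add: exp_minus inverse_eq_divide)
qed

end


theorem mainTheorem4:
  fixes z :: real
  assumes "-1/2 < z" and "z < 1/2"
  shows "(\<lambda>n. vmom n * z ^ n) sums
           (if z = 0 then 1 else inverse (Sinv (1 / sqrt (1 - 2 * z^2))))"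
proof (cases "z = 0")
  case True
  have "(\<lambda>n. vmom n * z ^ n) = (\<lambda>n. if n = 0 then 1 else 0)"
    using True by (auto simp: fun_eq_iff vmom_def)
  then show ?thesis using True sums_single[of 0 "\<lambda>_. 1::real"] by simp
next
  case False
  define w where "w = z^2"
  have p: "0 < (1/2 - z) * (1/2 + z)" using assms by (intro mult_pos_pos) auto
  have w0: "0 \<le> w" unfolding w_def by simp
  have w1: "w \<le> 1/4" using p unfolding w_def by (simp add: power2_eq_square algebra_simps)
  define t where "t = Af w 1 - Yf w 1"
  have t0: "0 < t" unfolding t_def using D_pos[OF w0 w1, of 1] by simp
  have e: "exp (Tfun t) = 1 / sqrt (1 - 2 * z^2)" using main_rel[OF w0 w1] unfolding t_def w_def .
  have S: "Sinv (1 / sqrt (1 - 2 * z^2)) = t" using Sinv_eq[of t] t0 e by simp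
  have P1: "Pg w 1 = inverse t" using PD[OF w0 w1, of 1] t0 unfolding t_def by (simp add: field_simps)
  have s: "(\<lambda>n. Ppol n 1 * w^n) sums Pg w 1" using PS1[OF w0 w1, of 1] by simp
  have "(\<lambda>n. vmom (2*n) * z^(2*n)) sums Pg w 1"
    using s unfolding w_def by (simp add: vmom_def power_mult)
  then have "(\<lambda>n. vmom n * z ^ n) sums Pg w 1"
    by (subst sums_mono_reindex[where g="\<lambda>n. 2*n", symmetric])
       (auto simp: strict_mono_def vmom_def elim!: evenE)
  then show ?thesis using False S P1 by simp
qed


end
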